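(* Let $L$ be a $\kappa$-frame and $C\in\mathbb{C}L$. The quotient $L/C$ is d-reduced if and only if $C$ is clear.
   Context: $\kappa$ is a fixed regular cardinal; a $\kappa$-frame is a bounded distributive lattice having joins of all subsets of cardinality $<\kappa$ and satisfying the frame distributive law for such joins. A $\kappa$-ideal is a downset in which every subset of cardinality $<\kappa$ has an upper bound. A congruence is an equivalence relation that is a sub-$\kappa$-frame of $L\times L$; $\mathbb{C}L$ is the frame of congruences. For a $\kappa$-ideal $I$, $\partial_I=\{(a,b)\mid\forall x\in L:\ a\wedge x\in I\iff b\wedge x\in I\}$; a congruence is clear if it equals $\partial_I$ for some $\kappa$-ideal $I$. For a $\kappa$-frame $M$, $\mathfrak{D}_M=\{(a,b)\mid\forall x\in M:\ a\wedge x=0\iff b\wedge x=0\}$, and $M$ is d-reduced if $\mathfrak{D}_M$ is the trivial (diagonal) congruence, i.e. $a\ne b$ implies there is $x$ with exactly one of $a\wedge x$, $b\wedge x$ equal to $0$. *)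

theory Defs
  imports Main
begin

record 'a ostr =
  carrier :: "'a set"
  le :: "'a \<Rightarrow> 'a \<Rightarrow> bool"

definition small :: "'k rel \<Rightarrow> 'a set \<Rightarrow> bool" where
  "small \<kappa> S \<longleftrightarrow> (card_of S, \<kappa>) \<in> ordLess"

definition is_lub :: "'a ostr \<Rightarrow> 'a set \<Rightarrow> 'a \<Rightarrow> bool" where
  "is_lub M S x \<longleftrightarrow> x \<in> carrier M \<and> (\<forall>s\<in>S. le M s x) \<and>
     (\<forall>y\<in>carrier M. (\<forall>s\<in>S. le M s y) \<longrightarrow> le M x y)"

definition is_glb :: "'a ostr \<Rightarrow> 'a set \<Rightarrow> 'a \<Rightarrow> bool" where
  "is_glb M S x \<longleftrightarrow> x \<in> carrier M \<and> (\<forall>s\<in>S. le M x s) \<and>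
     (\<forall>y\<in>carrier M. (\<forall>s\<in>S. le M y s) \<longrightarrow> le M y x)"

definition Join :: "'a ostr \<Rightarrow> 'a set \<Rightarrow> 'a" where
  "Join M S = (THE x. is_lub M S x)"

definition Meet :: "'a ostr \<Rightarrow> 'a \<Rightarrow> 'a \<Rightarrow> 'a" where
  "Meet M a b = (THE x. is_glb M {a, b} x)"

definition Bot :: "'a ostr \<Rightarrow> 'a" where
  "Bot M = Join M {}"

definition kframe :: "'k rel \<Rightarrow> 'a ostr \<Rightarrow> bool" where
  "kframe \<kappa> M \<longleftrightarrow>
     (\<forall>a\<in>carrier M. le M a a) \<and>
     (\<forall>a\<in>carrier M. \<forall>b\<in>carrier M. le M a b \<and> le M b a \<longrightarrow> a = b) \<and>
     (\<forall>a\<in>carrier M. \<forall>b\<in>carrier M. \<forall>c\<in>carrier M. le M a b \<and> le M b c \<longrightarrow> le M a c) \<and>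
     (\<exists>t. is_glb M {} t) \<and>
     (\<forall>a\<in>carrier M. \<forall>b\<in>carrier M. \<exists>x. is_glb M {a, b} x) \<and>
     (\<forall>a\<in>carrier M. \<forall>b\<in>carrier M. \<exists>x. is_lub M {a, b} x) \<and>
     (\<forall>a\<in>carrier M. \<forall>b\<in>carrier M. \<forall>c\<in>carrier M.
        Meet M a (Join M {b, c}) = Join M {Meet M a b, Meet M a c}) \<and>
     (\<forall>S. S \<subseteq> carrier M \<and> small \<kappa> S \<longrightarrow> (\<exists>x. is_lub M S x)) \<and>
     (\<forall>a\<in>carrier M. \<forall>S. S \<subseteq> carrier M \<and> small \<kappa> S \<longrightarrow>
        Meet M a (Join M S) = Join M ((\<lambda>s. Meet M a s) ` S))"

text \<open>Congruence: an equivalence relation on L that is a sub-kappa-frame of L x L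
  (componentwise order; closed under binary meets and joins of size < kappa;
  top and bottom pairs are in it by reflexivity).\<close>
definition kcongruence :: "'k rel \<Rightarrow> 'a ostr \<Rightarrow> 'a rel \<Rightarrow> bool" where
  "kcongruence \<kappa> L C \<longleftrightarrow> equiv (carrier L) C \<and>
     (\<forall>a b c d. (a, b) \<in> C \<and> (c, d) \<in> C \<longrightarrow> (Meet L a c, Meet L b d) \<in> C) \<and>
     (\<forall>S. S \<subseteq> C \<and> small \<kappa> S \<longrightarrow> (Join L (fst ` S), Join L (snd ` S)) \<in> C)"

definition kideal :: "'k rel \<Rightarrow> 'a ostr \<Rightarrow> 'a set \<Rightarrow> bool" where
  "kideal \<kappa> L I \<longleftrightarrow> I \<subseteq> carrier L \<and>
     (\<forall>a\<in>I. \<forall>b\<in>carrier L. le L b a \<longrightarrow> b \<in> I) \<and>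
     (\<forall>S. S \<subseteq> I \<and> small \<kappa> S \<longrightarrow> (\<exists>u\<in>I. \<forall>s\<in>S. le L s u))"

definition partialI :: "'a ostr \<Rightarrow> 'a set \<Rightarrow> 'a rel" where
  "partialI L I = {(a, b). a \<in> carrier L \<and> b \<in> carrier L \<and>
      (\<forall>x\<in>carrier L. Meet L a x \<in> I \<longleftrightarrow> Meet L b x \<in> I)}"

definition clear :: "'k rel \<Rightarrow> 'a ostr \<Rightarrow> 'a rel \<Rightarrow> bool" where
  "clear \<kappa> L C \<longleftrightarrow> (\<exists>I. kideal \<kappa> L I \<and> C = partialI L I)"

definition kquotient :: "'a ostr \<Rightarrow> 'a rel \<Rightarrow> 'a set ostr" where
  "kquotient L C = \<lparr> carrier = carrier L // C,
     le = (\<lambda>X Y. \<exists>a\<in>X. \<exists>b\<in>Y. (Meet L a b, a) \<in> C) \<rparr>"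

definition frakD :: "'a ostr \<Rightarrow> 'a rel" where
  "frakD M = {(a, b). a \<in> carrier M \<and> b \<in> carrier M \<and>
      (\<forall>x\<in>carrier M. Meet M a x = Bot M \<longleftrightarrow> Meet M b x = Bot M)}"

definition d_reduced :: "'a ostr \<Rightarrow> bool" where
  "d_reduced M \<longleftrightarrow> frakD M = Id_on (carrier M)"

end

theory Submission
  imports Defs
begin

lemma small_empty: "Cinfinite \<kappa> \<Longrightarrow> small \<kappa> {}"
  unfolding small_def using Cinfinite_gt_empty by auto

lemma small_image: "small \<kappa> S \<Longrightarrow> small \<kappa> (f ` S)"
  unfolding small_def using card_of_image ordLeq_ordLess_trans by blast

lemma kf_parts:
  assumes "kframe \<kappa> M"
  shows "\<forall>a\<in>carrier M. le M a a"
    "\<forall>a\<in>carrier M. \<forall>b\<in>carrier M. le M a b \<and> le M b a \<longrightarrow> a = b"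
    "\<forall>a\<in>carrier M. \<forall>b\<in>carrier M. \<forall>c\<in>carrier M. le M a b \<and> le M b c \<longrightarrow> le M a c"
    "\<forall>a\<in>carrier M. \<forall>b\<in>carrier M. \<exists>x. is_glb M {a, b} x"
    "\<forall>S. S \<subseteq> carrier M \<and> small \<kappa> S \<longrightarrow> (\<exists>x. is_lub M S x)"
proof -
  note h = assms[unfolded kframe_def]
  show "\<forall>a\<in>carrier M. le M a a" using h by (rule conjunct1)
  show "\<forall>a\<in>carrier M. \<forall>b\<in>carrier M. le M a b \<and> le M b a \<longrightarrow> a = b"
    using h[THEN conjunct2] by (rule conjunct1)
  show "\<forall>a\<in>carrier M. \<forall>b\<in>carrier M. \<forall>c\<in>carrier M. le M a b \<and> le M b c \<longrightarrow> le M a c"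
    using h[THEN conjunct2, THEN conjunct2] by (rule conjunct1)
  show "\<forall>a\<in>carrier M. \<forall>b\<in>carrier M. \<exists>x. is_glb M {a, b} x"
    using h[THEN conjunct2, THEN conjunct2, THEN conjunct2, THEN conjunct2] by (rule conjunct1)
  show "\<forall>S. S \<subseteq> carrier M \<and> small \<kappa> S \<longrightarrow> (\<exists>x. is_lub M S x)"
    using h[THEN conjunct2, THEN conjunct2, THEN conjunct2, THEN conjunct2, THEN conjunct2,
      THEN conjunct2, THEN conjunct2] by (rule conjunct1)
qed

lemma kf_refl: "kframe \<kappa> L \<Longrightarrow> a \<in> carrier L \<Longrightarrow> le L a a"
  using kf_parts(1) by blast
lemma kf_antisym: "kframe \<kappa> L \<Longrightarrow> a \<in> carrier L \<Longrightarrow> b \<in> carrier L \<Longrightarrow> le L a b \<Longrightarrow> le L b a \<Longrightarrow> a = b"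
  using kf_parts(2) by blast
lemma kf_trans: "kframe \<kappa> L \<Longrightarrow> a \<in> carrier L \<Longrightarrow> b \<in> carrier L \<Longrightarrow> c \<in> carrier L \<Longrightarrow> le L a b \<Longrightarrow> le L b c \<Longrightarrow> le L a c"
  using kf_parts(3) by blast

lemma glb_unique:
  assumes "\<And>a b. a \<in> carrier M \<Longrightarrow> b \<in> carrier M \<Longrightarrow> le M a b \<Longrightarrow> le M b a \<Longrightarrow> a = b"
    and "is_glb M S x" "is_glb M S y"
  shows "x = y"
  using assms unfolding is_glb_def by blast

lemma lub_unique:
  assumes "\<And>a b. a \<in> carrier M \<Longrightarrow> b \<in> carrier M \<Longrightarrow> le M a b \<Longrightarrow> le M b a \<Longrightarrow> a = b"
    and "is_lub M S x" "is_lub M S y"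
  shows "x = y"
  using assms unfolding is_lub_def by blast

lemma Meet_eq:
  assumes "\<And>a b. a \<in> carrier M \<Longrightarrow> b \<in> carrier M \<Longrightarrow> le M a b \<Longrightarrow> le M b a \<Longrightarrow> a = b"
    and "is_glb M {a, b} x"
  shows "Meet M a b = x"
  unfolding Meet_def
  proof (rule the_equality)
  show "is_glb M {a, b} x" by (rule assms(2))
  fix y assume "is_glb M {a, b} y"
  then show "y = x" using glb_unique[OF assms(1)] assms(2) by blast
qed

lemma Join_eq:
  assumes "\<And>a b. a \<in> carrier M \<Longrightarrow> b \<in> carrier M \<Longrightarrow> le M a b \<Longrightarrow> le M b a \<Longrightarrow> a = b"
    and "is_lub M S x"
  shows "Join M S = x"
  unfolding Join_def
  proof (rule the_equality)
  show "is_lub M S x" by (rule assms(2))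
  fix y assume "is_lub M S y"
  then show "y = x" using lub_unique[OF assms(1)] assms(2) by blast
qed

lemma kf_Meet_glb:
  assumes "kframe \<kappa> L" "a \<in> carrier L" "b \<in> carrier L"
  shows "is_glb L {a, b} (Meet L a b)"
proof -
  obtain x where x: "is_glb L {a,b} x" using kf_parts(4)[OF assms(1)] assms(2,3) by blast
  have "Meet L a b = x" by (rule Meet_eq[OF kf_antisym[OF assms(1)] x])
  then show ?thesis using x by simp
qed

lemma kf_Meet_props:
  assumes "kframe \<kappa> L" "a \<in> carrier L" "b \<in> carrier L"
  shows "Meet L a b \<in> carrier L" "le L (Meet L a b) a" "le L (Meet L a b) b"
    "\<And>y. y \<in> carrier L \<Longrightarrow> le L y a \<Longrightarrow> le L y b \<Longrightarrow> le L y (Meet L a b)"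
  using kf_Meet_glb[OF assms] unfolding is_glb_def by auto

lemma kf_Meet_eqI:
  assumes "kframe \<kappa> L" "a \<in> carrier L" "b \<in> carrier L" "z \<in> carrier L"
    "le L z a" "le L z b" "\<And>y. y \<in> carrier L \<Longrightarrow> le L y a \<Longrightarrow> le L y b \<Longrightarrow> le L y z"
  shows "Meet L a b = z"
  apply (rule Meet_eq[OF kf_antisym[OF assms(1)]])
  using assms unfolding is_glb_def by auto

lemma Meet_comm: "Meet L a b = Meet L b a"
  unfolding Meet_def by (simp add: insert_commute)

lemma kf_Meet_le:
  assumes "kframe \<kappa> L" "a \<in> carrier L" "b \<in> carrier L" "le L a b"
  shows "Meet L a b = a"
  using assms by (intro kf_Meet_eqI[OF assms(1)]) (auto intro: kf_refl)

lemma kf_Meet_idem: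
  assumes "kframe \<kappa> L" "a \<in> carrier L"
  shows "Meet L a a = a"
  using assms kf_Meet_le kf_refl by metis

lemma kf_Meet_assoc:
  assumes L: "kframe \<kappa> L" and c: "a \<in> carrier L" "b \<in> carrier L" "c \<in> carrier L"
  shows "Meet L (Meet L a b) c = Meet L a (Meet L b c)"
proof -
  note P = kf_Meet_props[OF L]
  have ab: "Meet L a b \<in> carrier L" and bc: "Meet L b c \<in> carrier L" using P c by auto
  have abc: "Meet L (Meet L a b) c \<in> carrier L" using P ab c by auto
  show ?thesis
  proof (rule sym, rule kf_Meet_eqI[OF L c(1) bc abc])
    show "le L (Meet L (Meet L a b) c) a"
      using kf_trans[OF L abc ab c(1)] P ab c by blast
    have "le L (Meet L (Meet L a b) c) b"
      using kf_trans[OF L abc ab c(2)] P ab c by blast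
    moreover have "le L (Meet L (Meet L a b) c) c" using P ab c by blast
    ultimately show "le L (Meet L (Meet L a b) c) (Meet L b c)" using P c abc by blast
    fix y assume y: "y \<in> carrier L" "le L y a" "le L y (Meet L b c)"
    have "le L y b" using kf_trans[OF L y(1) bc c(2)] y P c by blast
    have "le L y c" using kf_trans[OF L y(1) bc c(3)] y P c by blast
    have "le L y (Meet L a b)" using P c y \<open>le L y b\<close> by blast
    then show "le L y (Meet L (Meet L a b) c)" using P ab c y \<open>le L y c\<close> by blast
  qed
qed

lemma kf_Bot:
  assumes L: "kframe \<kappa> L" and k: "Cinfinite \<kappa>"
  shows "Bot L \<in> carrier L" "\<And>y. y \<in> carrier L \<Longrightarrow> le L (Bot L) y"
proof -
  obtain x where x: "is_lub L {} x" using kf_parts(5)[OF L] small_empty[OF k] by blast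
  have "Bot L = x" unfolding Bot_def by (rule Join_eq[OF kf_antisym[OF L] x])
  then show "Bot L \<in> carrier L" "\<And>y. y \<in> carrier L \<Longrightarrow> le L (Bot L) y"
    using x unfolding is_lub_def by auto
qed

lemma kf_Meet_Bot:
  assumes L: "kframe \<kappa> L" and k: "Cinfinite \<kappa>" and y: "y \<in> carrier L"
  shows "Meet L (Bot L) y = Bot L" "Meet L y (Bot L) = Bot L"
  using kf_Meet_le[OF L kf_Bot(1)[OF L k] y kf_Bot(2)[OF L k y]] Meet_comm by metis+

locale setting =
  fixes \<kappa> :: "'k rel" and L :: "'a ostr" and C :: "'a rel"
  assumes k: "Cinfinite \<kappa>" and L: "kframe \<kappa> L" and C: "kcongruence \<kappa> L C"
begin

lemma eqv: "equiv (carrier L) C" using C[unfolded kcongruence_def] by (rule conjunct1)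
lemma cmeet: "(a, b) \<in> C \<Longrightarrow> (c, d) \<in> C \<Longrightarrow> (Meet L a c, Meet L b d) \<in> C"
  using C[unfolded kcongruence_def, THEN conjunct2, THEN conjunct1] by blast
lemma cjoin: "S \<subseteq> C \<Longrightarrow> small \<kappa> S \<Longrightarrow> (Join L (fst ` S), Join L (snd ` S)) \<in> C"
  using C[unfolded kcongruence_def, THEN conjunct2, THEN conjunct2] by blast
lemma Csub: "(a, b) \<in> C \<Longrightarrow> a \<in> carrier L \<and> b \<in> carrier L"
  using eqv unfolding equiv_def refl_on_def by blast
lemma Crefl: "a \<in> carrier L \<Longrightarrow> (a, a) \<in> C"
  using eqv unfolding equiv_def refl_on_def by blast
lemma Csym: "(a, b) \<in> C \<Longrightarrow> (b, a) \<in> C"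
  using eqv unfolding equiv_def sym_def by blast
lemma Ctrans: "(a, b) \<in> C \<Longrightarrow> (b, c) \<in> C \<Longrightarrow> (a, c) \<in> C"
  using eqv unfolding equiv_def trans_def by blast
lemma cls_eq: "a \<in> carrier L \<Longrightarrow> b \<in> carrier L \<Longrightarrow> C``{a} = C``{b} \<longleftrightarrow> (a, b) \<in> C"
  using eqv equiv_class_eq_iff by fastforce
lemma mem_cls: "x \<in> C``{a} \<longleftrightarrow> (a, x) \<in> C" by simp

abbreviation "Q \<equiv> kquotient L C"

lemma Q_carrier: "carrier Q = (\<lambda>a. C``{a}) ` carrier L"
  unfolding kquotient_def quotient_def by auto

lemma Q_le: assumes "a \<in> carrier L" "b \<in> carrier L"
  shows "le Q (C``{a}) (C``{b}) \<longleftrightarrow> (Meet L a b, a) \<in> C"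
proof
  assume "le Q (C``{a}) (C``{b})"
  then obtain a' b' where h: "(a, a') \<in> C" "(b, b') \<in> C" "(Meet L a' b', a') \<in> C"
    unfolding kquotient_def by auto
  have "(Meet L a b, a') \<in> C" using Ctrans[OF cmeet[OF h(1) h(2)] h(3)] .
  then show "(Meet L a b, a) \<in> C" using Ctrans Csym[OF h(1)] by blast
next
  assume "(Meet L a b, a) \<in> C"
  then show "le Q (C``{a}) (C``{b})" unfolding kquotient_def using assms Crefl by auto
qed

lemma Q_antisym:
  assumes "X \<in> carrier Q" "Y \<in> carrier Q" "le Q X Y" "le Q Y X"
  shows "X = Y"
proof -
  obtain a b where ab: "a \<in> carrier L" "b \<in> carrier L" "X = C``{a}" "Y = C``{b}"
    using assms Q_carrier by auto
  have 1: "(Meet L a b, a) \<in> C" using assms(3) ab Q_le by simp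
  have 2: "(Meet L b a, b) \<in> C" using assms(4) ab Q_le by simp
  have "(a, b) \<in> C" using Ctrans[OF Csym[OF 1]] 2 Meet_comm[of L a b] by simp
  then show ?thesis using ab cls_eq by simp
qed

lemma Q_Meet:
  assumes a: "a \<in> carrier L" and b: "b \<in> carrier L"
  shows "Meet Q (C``{a}) (C``{b}) = C``{Meet L a b}"
proof (rule Meet_eq[OF Q_antisym])
  note P = kf_Meet_props[OF L]
  have ab: "Meet L a b \<in> carrier L" using P a b by blast
  show "is_glb Q {C``{a}, C``{b}} (C``{Meet L a b})"
    unfolding is_glb_def
  proof (intro conjI ballI impI)
    show "C``{Meet L a b} \<in> carrier Q" using Q_carrier ab by auto
    fix s assume "s \<in> {C``{a}, C``{b}}"
    moreover have "le Q (C``{Meet L a b}) (C``{a})"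
      using Q_le[OF ab a] Crefl[OF ab] kf_Meet_le[OF L ab a P(2)[OF a b]] by simp
    moreover have "le Q (C``{Meet L a b}) (C``{b})"
      using Q_le[OF ab b] Crefl[OF ab] kf_Meet_le[OF L ab b P(3)[OF a b]] by simp
    ultimately show "le Q (C``{Meet L a b}) s" by blast
  next
    fix Y assume Y: "Y \<in> carrier Q" "\<forall>s\<in>{C``{a}, C``{b}}. le Q Y s"
    then obtain y where y: "y \<in> carrier L" "Y = C``{y}" using Q_carrier by auto
    have ya: "(Meet L y a, y) \<in> C" and yb: "(Meet L y b, y) \<in> C"
      using Y(2) y Q_le[OF y(1) a] Q_le[OF y(1) b] by auto
    have ya': "Meet L y a \<in> carrier L" using P y a by blast
    have "(Meet L (Meet L y a) b, Meet L y b) \<in> C" using cmeet[OF ya Crefl[OF b]] .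
    then have "(Meet L (Meet L y a) b, y) \<in> C" using Ctrans[OF _ yb] by blast
    then have "(Meet L y (Meet L a b), y) \<in> C"
      using kf_Meet_assoc[OF L y(1) a b] by simp
    then show "le Q Y (C``{Meet L a b})" using Q_le[OF y(1) ab] y by simp
  qed
qed

lemma Q_Bot: "Bot Q = C``{Bot L}"
  unfolding Bot_def
proof (rule Join_eq[OF Q_antisym])
  have B: "Bot L \<in> carrier L" using kf_Bot[OF L k] by blast
  show "is_lub Q {} (C``{Join L {}})"
    unfolding is_lub_def
  proof (intro conjI ballI impI)
    show "C``{Join L {}} \<in> carrier Q" using Q_carrier B unfolding Bot_def by auto
    fix Y assume "Y \<in> carrier Q"
    then obtain y where y: "y \<in> carrier L" "Y = C``{y}" using Q_carrier by auto
    show "le Q (C``{Join L {}}) Y" using Q_le[OF B y(1)] y kf_Meet_Bot[OF L k y(1)] Crefl[OF B]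
      unfolding Bot_def by simp
  qed simp
qed

definition R where
  "R \<longleftrightarrow> (\<forall>a\<in>carrier L. \<forall>b\<in>carrier L.
     (\<forall>x\<in>carrier L. (Meet L a x, Bot L) \<in> C \<longleftrightarrow> (Meet L b x, Bot L) \<in> C) \<longrightarrow> (a, b) \<in> C)"

lemma dred_R: "d_reduced Q \<longleftrightarrow> R"
proof -
  have B: "Bot L \<in> carrier L" using kf_Bot[OF L k] by blast
  have MC: "\<And>a x. a \<in> carrier L \<Longrightarrow> x \<in> carrier L \<Longrightarrow> Meet L a x \<in> carrier L"
    using kf_Meet_props[OF L] by blast
  have key: "\<And>a b. a \<in> carrier L \<Longrightarrow> b \<in> carrier L \<Longrightarrow>
     (C``{a}, C``{b}) \<in> frakD Q \<longleftrightarrow>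
     (\<forall>x\<in>carrier L. (Meet L a x, Bot L) \<in> C \<longleftrightarrow> (Meet L b x, Bot L) \<in> C)"
  proof -
    fix a b assume a: "a \<in> carrier L" and b: "b \<in> carrier L"
    have e: "\<And>c x. c \<in> carrier L \<Longrightarrow> x \<in> carrier L \<Longrightarrow>
      Meet Q (C``{c}) (C``{x}) = Bot Q \<longleftrightarrow> (Meet L c x, Bot L) \<in> C"
      using Q_Meet Q_Bot cls_eq MC B by simp
    have "(C``{a}, C``{b}) \<in> frakD Q \<longleftrightarrow>
      (\<forall>X\<in>carrier Q. Meet Q (C``{a}) X = Bot Q \<longleftrightarrow> Meet Q (C``{b}) X = Bot Q)"
      unfolding frakD_def using a b Q_carrier by auto
    also have "\<dots> \<longleftrightarrow> (\<forall>x\<in>carrier L. Meet Q (C``{a}) (C``{x}) = Bot Q \<longleftrightarrow> Meet Q (C``{b}) (C``{x}) = Bot Q)"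
      unfolding Q_carrier by blast
    also have "\<dots> \<longleftrightarrow> (\<forall>x\<in>carrier L. (Meet L a x, Bot L) \<in> C \<longleftrightarrow> (Meet L b x, Bot L) \<in> C)"
      using e a b by simp
    finally show "(C``{a}, C``{b}) \<in> frakD Q \<longleftrightarrow>
     (\<forall>x\<in>carrier L. (Meet L a x, Bot L) \<in> C \<longleftrightarrow> (Meet L b x, Bot L) \<in> C)" .
  qed
  have sub: "frakD Q \<subseteq> carrier Q \<times> carrier Q" unfolding frakD_def by auto
  have idsub: "Id_on (carrier Q) \<subseteq> frakD Q" unfolding frakD_def Id_on_def by auto
  show ?thesis
  proof
    assume d: "d_reduced Q"
    show R unfolding R_def
    proof (intro ballI impI)
      fix a b assume ab: "a \<in> carrier L" "b \<in> carrier L"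
        "\<forall>x\<in>carrier L. (Meet L a x, Bot L) \<in> C \<longleftrightarrow> (Meet L b x, Bot L) \<in> C"
      then have "(C``{a}, C``{b}) \<in> frakD Q" using key[OF ab(1,2)] by simp
      then have "(C``{a}, C``{b}) \<in> Id_on (carrier Q)" using d unfolding d_reduced_def by simp
      then have "C``{a} = C``{b}" by (rule Id_onE) simp
      then show "(a, b) \<in> C" using cls_eq ab by blast
    qed
  next
    assume r: R
    have "frakD Q \<subseteq> Id_on (carrier Q)"
    proof
      fix p assume p: "p \<in> frakD Q"
      obtain X Y where XY: "p = (X, Y)" by (cases p)
      have "X \<in> carrier Q" "Y \<in> carrier Q" using p XY sub by auto
      then obtain a b where ab: "a \<in> carrier L" "b \<in> carrier L" "X = C``{a}" "Y = C``{b}"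
        unfolding Q_carrier by blast
      have "\<forall>x\<in>carrier L. (Meet L a x, Bot L) \<in> C \<longleftrightarrow> (Meet L b x, Bot L) \<in> C"
        using key[OF ab(1,2)] p XY ab(3,4) by simp
      then have "(a, b) \<in> C" using r[unfolded R_def, rule_format, OF ab(1,2)] by blast
      then have "X = Y" using ab cls_eq by simp
      then show "p \<in> Id_on (carrier Q)" using XY \<open>X \<in> carrier Q\<close> by auto
    qed
    then show "d_reduced Q" unfolding d_reduced_def using idsub by blast
  qed
qed

lemma R_clear: "R \<longleftrightarrow> clear \<kappa> L C"
proof -
  have B: "Bot L \<in> carrier L" and Ble: "\<And>y. y \<in> carrier L \<Longrightarrow> le L (Bot L) y"
    using kf_Bot[OF L k] by blast+
  note P = kf_Meet_props[OF L]
  show ?thesis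
  proof
    assume r: R
    define I where "I = {a. (a, Bot L) \<in> C}"
    have Isub: "I \<subseteq> carrier L" unfolding I_def using Csub by blast
    have "kideal \<kappa> L I" unfolding kideal_def
    proof (intro conjI ballI allI impI)
      show "I \<subseteq> carrier L" by (rule Isub)
    next
      fix a b assume a: "a \<in> I" and b: "b \<in> carrier L" and ba: "le L b a"
      have aC: "a \<in> carrier L" using a Isub by blast
      have "(Meet L b a, Meet L b (Bot L)) \<in> C" using cmeet[OF Crefl[OF b]] a unfolding I_def by blast
      then show "b \<in> I" unfolding I_def
        using kf_Meet_le[OF L b aC ba] kf_Meet_Bot[OF L k b] by simp
    next
      fix S assume S: "S \<subseteq> I \<and> small \<kappa> S"
      show "\<exists>u\<in>I. \<forall>s\<in>S. le L s u"
      proof (cases "S = {}")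
        case True then show ?thesis using B Crefl[OF B] unfolding I_def by auto
      next
        case False
        define T where "T = (\<lambda>s. (s, Bot L)) ` S"
        have T1: "T \<subseteq> C" using S unfolding T_def I_def by auto
        have T2: "small \<kappa> T" unfolding T_def using S small_image by blast
        have "(Join L (fst ` T), Join L (snd ` T)) \<in> C" by (rule cjoin[OF T1 T2])
        moreover have "fst ` T = S" unfolding T_def by force
        moreover have "snd ` T = {Bot L}" unfolding T_def using False by force
        moreover have "Join L {Bot L} = Bot L"
          by (rule Join_eq[OF kf_antisym[OF L]]) (auto simp: is_lub_def B intro: kf_refl[OF L])
        ultimately have J: "(Join L S, Bot L) \<in> C" by simp
        obtain x where x: "is_lub L S x" using kf_parts(5)[OF L] S Isub by blast
        have "Join L S = x" by (rule Join_eq[OF kf_antisym[OF L] x])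
        then show ?thesis using J x unfolding I_def is_lub_def by auto
      qed
    qed
    moreover have "C = partialI L I"
    proof
      show "C \<subseteq> partialI L I"
      proof
        fix p assume p: "p \<in> C"
        then obtain a b where ab: "p = (a, b)" "(a, b) \<in> C" by (cases p) auto
        have "\<And>x. x \<in> carrier L \<Longrightarrow> (Meet L a x, Bot L) \<in> C \<longleftrightarrow> (Meet L b x, Bot L) \<in> C"
        proof -
          fix x assume x: "x \<in> carrier L"
          have e: "(Meet L a x, Meet L b x) \<in> C" using cmeet[OF ab(2) Crefl[OF x]] .
          show "(Meet L a x, Bot L) \<in> C \<longleftrightarrow> (Meet L b x, Bot L) \<in> C"
            using Ctrans[OF e, of "Bot L"] Ctrans[OF Csym[OF e], of "Bot L"] by blast
        qed
        moreover have "a \<in> carrier L" "b \<in> carrier L" using Csub[OF ab(2)] by auto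
        ultimately show "p \<in> partialI L I" unfolding partialI_def I_def using ab(1) by simp
      qed
    next
      show "partialI L I \<subseteq> C"
      proof
        fix p assume "p \<in> partialI L I"
        then obtain a b where "p = (a, b)" "a \<in> carrier L" "b \<in> carrier L"
          "\<forall>x\<in>carrier L. Meet L a x \<in> I \<longleftrightarrow> Meet L b x \<in> I"
          unfolding partialI_def by auto
        then show "p \<in> C" using r[unfolded R_def, rule_format, of a b] unfolding I_def by simp
      qed
    qed
    ultimately show "clear \<kappa> L C" unfolding clear_def by blast
  next
    assume "clear \<kappa> L C"
    then obtain I where I: "kideal \<kappa> L I" and CI: "C = partialI L I" unfolding clear_def by blast
    have Isub: "I \<subseteq> carrier L" and down: "\<And>a b. a \<in> I \<Longrightarrow> b \<in> carrier L \<Longrightarrow> le L b a \<Longrightarrow> b \<in> I"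
      using I unfolding kideal_def by blast+
    obtain u where "u \<in> I" using I small_empty[OF k] unfolding kideal_def by blast
    then have BI: "Bot L \<in> I" using down[OF _ B Ble] Isub by blast
    have M0: "\<And>a x. a \<in> carrier L \<Longrightarrow> x \<in> carrier L \<Longrightarrow>
       (Meet L a x, Bot L) \<in> C \<longleftrightarrow> Meet L a x \<in> I"
    proof -
      fix a x assume a: "a \<in> carrier L" and x: "x \<in> carrier L"
      have ax: "Meet L a x \<in> carrier L" using P(1)[OF a x] .
      have B0: "\<And>y. y \<in> carrier L \<Longrightarrow> Meet L (Bot L) y \<in> I"
        using kf_Meet_Bot(1)[OF L k] BI by simp
      have "(Meet L a x, Bot L) \<in> C \<longleftrightarrow> (\<forall>y\<in>carrier L. Meet L (Meet L a x) y \<in> I)"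
        unfolding CI partialI_def using ax B B0 by simp
      also have "\<dots> \<longleftrightarrow> Meet L a x \<in> I"
      proof
        assume "\<forall>y\<in>carrier L. Meet L (Meet L a x) y \<in> I"
        then have "Meet L (Meet L a x) x \<in> I" using x by blast
        moreover have "Meet L (Meet L a x) x = Meet L a x"
          using kf_Meet_assoc[OF L a x x] kf_Meet_idem[OF L x] by simp
        ultimately show "Meet L a x \<in> I" by simp
      next
        assume ai: "Meet L a x \<in> I"
        show "\<forall>y\<in>carrier L. Meet L (Meet L a x) y \<in> I"
        proof
          fix y assume y: "y \<in> carrier L"
          show "Meet L (Meet L a x) y \<in> I"
            by (rule down[OF ai P(1)[OF ax y] P(2)[OF ax y]])
        qed
      qed
      finally show "(Meet L a x, Bot L) \<in> C \<longleftrightarrow> Meet L a x \<in> I" .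
    qed
    show R unfolding R_def
    proof (intro ballI impI)
      fix a b assume a: "a \<in> carrier L" and b: "b \<in> carrier L"
        and h: "\<forall>x\<in>carrier L. (Meet L a x, Bot L) \<in> C \<longleftrightarrow> (Meet L b x, Bot L) \<in> C"
      have "\<forall>x\<in>carrier L. Meet L a x \<in> I \<longleftrightarrow> Meet L b x \<in> I"
        using h M0[OF a] M0[OF b] by blast
      then have "(a, b) \<in> partialI L I" unfolding partialI_def using a b by simp
      then show "(a, b) \<in> C" using CI by simp
    qed
  qed
qed

end

theorem mainTheorem11:
  fixes \<kappa> :: "'k rel" and L :: "'a ostr" and C :: "'a rel"
  assumes "Cinfinite \<kappa>" and "regularCard \<kappa>"
    and "kframe \<kappa> L"
    and "kcongruence \<kappa> L C"
  shows "d_reduced (kquotient L C) \<longleftrightarrow> clear \<kappa> L C"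
proof -
  interpret setting \<kappa> L C using assms by (unfold_locales) auto
  show ?thesis using dred_R R_clear by simp
qed

end
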